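(* Let $f,g_1,\dots,g_m,h_1,\dots,h_l\in\mathbb{R}[\mathbf{x}]$ and suppose the following holds: there is a nonnegative integer $r\le m/2$, reals $\overline R_i>\underline R_i>0$ and sets $T_i\subseteq[n]$ for $i\in[r]$, and reals $\overline R_j>0$ and sets $T_j\subseteq[n]$ for $j\in[m]\setminus[2r]$, such that (1) $(\bigcup_{i\in[r]}T_i)\cup(\bigcup_{j\in[m]\setminus[2r]}T_j)=[n]$; (2) $g_i=\|\mathbf{x}(T_i)\|_2^2-\underline R_i$ and $g_{i+r}=\overline R_i-\|\mathbf{x}(T_i)\|_2^2$ for $i\in[r]$; (3) $g_j=\overline R_j-\|\mathbf{x}(T_j)\|_2^2$ for $j\in[m]\setminus[2r]$. Then the linear program $(\mathrm{LP}_k)$ has a feasible solution for every integer $k\ge k_{\min}$, and therefore the POP of minimizing $f$ over $S(g)\cap V(h)$ has the constant trace property.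
   Context: $\mathbf{x}=(x_1,\dots,x_n)$, and for $T\subseteq[n]$, $\mathbf{x}(T)=(x_t)_{t\in T}$. $\lceil p\rceil:=\lceil\deg(p)/2\rceil$; $\mathbb{N}^n_d:=\{\alpha\in\mathbb{N}^n:|\alpha|\le d\}$; $s(d):=\binom{n+d}{n}$; $\mathbf{v}_d=(\mathbf{x}^\alpha)_{\alpha\in\mathbb{N}^n_d}$; $S(g)=\{\mathbf{x}:g_i(\mathbf{x})\ge0\ \forall i\}$, $V(h)=\{\mathbf{x}:h_j(\mathbf{x})=0\ \forall j\}$; $k_{\min}:=\max\{\lceil f\rceil,\lceil g_i\rceil,\lceil h_j\rceil\}$. $(\mathrm{LP}_k)$: minimize $\xi$ over $\xi\in\mathbb{R}$, real diagonal $\mathbf{G}_0$ of size $s(k)$, real diagonal $\mathbf{G}_i$ of size $s(k-\lceil g_i\rceil)$, vectors $\mathbf{u}_j\in\mathbb{R}^{s(2(k-\lceil h_j\rceil))}$, subject to $\mathbf{G}_i-\mathbf{I}\succeq0$ ($i\in\{0\}\cup[m]$) and the polynomial identity $\xi=\mathbf{v}_k^\top\mathbf{G}_0\mathbf{v}_k+\sum_{i\in[m]}g_i\mathbf{v}_{k-\lceil g_i\rceil}^\top\mathbf{G}_i\mathbf{v}_{k-\lceil g_i\rceil}+\sum_{j\in[l]}h_j\mathbf{v}_{2(k-\lceil h_j\rceil)}^\top\mathbf{u}_j$. Constant trace property (CTP): for every integer $k\ge k_{\min}$ there exist $a_k>0$ and a positive definite block-diagonal $\mathbf{P}_k=\mathrm{diag}(\mathbf{P}_{k,0},\dots,\mathbf{P}_{k,m})$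 (blocks of sizes $s(k),s(k-\lceil g_1\rceil),\dots,s(k-\lceil g_m\rceil)$) such that every $\mathbf{y}=(y_\alpha)_{\alpha\in\mathbb{N}^n_{2k}}$ with $\mathbf{M}_{k-\lceil h_j\rceil}(h_j\mathbf{y})=0$ ($j\in[l]$) and $y_{\mathbf{0}}=1$ satisfies $\mathrm{trace}(\mathbf{P}_k\mathbf{D}_k(\mathbf{y})\mathbf{P}_k)=a_k$, where $\mathbf{D}_k(\mathbf{y})=\mathrm{diag}(\mathbf{M}_k(\mathbf{y}),\mathbf{M}_{k-\lceil g_1\rceil}(g_1\mathbf{y}),\dots,\mathbf{M}_{k-\lceil g_m\rceil}(g_m\mathbf{y}))$, $\mathbf{M}_d(\mathbf{y})=(y_{\alpha+\beta})_{\alpha,\beta\in\mathbb{N}^n_d}$, $\mathbf{M}_d(q\mathbf{y})=(\sum_\gamma q_\gamma y_{\alpha+\beta+\gamma})_{\alpha,\beta\in\mathbb{N}^n_d}$. *)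

theory Defs
  imports "HOL-Analysis.Analysis" "HOL-Library.Poly_Mapping"
begin

(* Variable x_t corresponds to key t (1-based, t \<in> {1..n}). *)
type_synonym monom = "nat \<Rightarrow>\<^sub>0 nat"
type_synonym mpoly = "monom \<Rightarrow>\<^sub>0 real"

definition mdeg :: "monom \<Rightarrow> nat" where
  "mdeg \<alpha> = (\<Sum>t\<in>Poly_Mapping.keys \<alpha>. Poly_Mapping.lookup \<alpha> t)"

definition pdeg :: "mpoly \<Rightarrow> nat" where
  "pdeg p = Max (insert 0 (mdeg ` Poly_Mapping.keys p))"

definition pceil :: "mpoly \<Rightarrow> nat" where
  "pceil p = (pdeg p + 1) div 2"

definition Nset :: "nat \<Rightarrow> nat \<Rightarrow> monom set" where
  "Nset n d = {\<alpha>. Poly_Mapping.keys \<alpha> \<subseteq> {1..n} \<and> mdeg \<alpha> \<le> d}"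

definition Xm :: "monom \<Rightarrow> mpoly" where
  "Xm \<alpha> = Poly_Mapping.single \<alpha> 1"

definition pconst :: "real \<Rightarrow> mpoly" where
  "pconst c = Poly_Mapping.single 0 c"

definition in_vars :: "nat \<Rightarrow> mpoly \<Rightarrow> bool" where
  "in_vars n p \<longleftrightarrow> (\<forall>\<alpha>\<in>Poly_Mapping.keys p. Poly_Mapping.keys \<alpha> \<subseteq> {1..n})"

definition sqnorm :: "nat set \<Rightarrow> mpoly" where
  "sqnorm T = (\<Sum>t\<in>T. Xm (Poly_Mapping.single t 2))"

(* g_0 := 1 (used for the moment-matrix block), g_i otherwise *)
definition gg :: "(nat \<Rightarrow> mpoly) \<Rightarrow> nat \<Rightarrow> mpoly" where
  "gg g i = (if i = 0 then 1 else g i)"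

(* matrices indexed by a finite index set I, as functions I \<times> I \<Rightarrow> real *)
definition diag_on :: "'i set \<Rightarrow> ('i \<Rightarrow> 'i \<Rightarrow> real) \<Rightarrow> bool" where
  "diag_on I M \<longleftrightarrow> (\<forall>a\<in>I. \<forall>b\<in>I. a \<noteq> b \<longrightarrow> M a b = 0)"

definition psd_on :: "'i set \<Rightarrow> ('i \<Rightarrow> 'i \<Rightarrow> real) \<Rightarrow> bool" where
  "psd_on I M \<longleftrightarrow> (\<forall>a\<in>I. \<forall>b\<in>I. M a b = M b a) \<and>
     (\<forall>v. (\<Sum>a\<in>I. \<Sum>b\<in>I. v a * M a b * v b) \<ge> 0)"

definition pd_on :: "'i set \<Rightarrow> ('i \<Rightarrow> 'i \<Rightarrow> real) \<Rightarrow> bool" where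
  "pd_on I M \<longleftrightarrow> (\<forall>a\<in>I. \<forall>b\<in>I. M a b = M b a) \<and>
     (\<forall>v. (\<exists>a\<in>I. v a \<noteq> 0) \<longrightarrow> (\<Sum>a\<in>I. \<Sum>b\<in>I. v a * M a b * v b) > 0)"

definition idm :: "'i \<Rightarrow> 'i \<Rightarrow> real" where
  "idm a b = (if a = b then 1 else 0)"

definition quadpoly :: "nat \<Rightarrow> nat \<Rightarrow> (monom \<Rightarrow> monom \<Rightarrow> real) \<Rightarrow> mpoly" where
  "quadpoly n d G = (\<Sum>\<alpha>\<in>Nset n d. \<Sum>\<beta>\<in>Nset n d. pconst (G \<alpha> \<beta>) * Xm (\<alpha> + \<beta>))"

definition linpoly :: "nat \<Rightarrow> nat \<Rightarrow> (monom \<Rightarrow> real) \<Rightarrow> mpoly" where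
  "linpoly n d u = (\<Sum>\<alpha>\<in>Nset n d. pconst (u \<alpha>) * Xm \<alpha>)"

definition kmin :: "mpoly \<Rightarrow> nat \<Rightarrow> nat \<Rightarrow> (nat \<Rightarrow> mpoly) \<Rightarrow> (nat \<Rightarrow> mpoly) \<Rightarrow> nat" where
  "kmin f m l g h = Max ({pceil f} \<union> pceil ` g ` {1..m} \<union> pceil ` h ` {1..l})"

(* feasibility of (LP_k); block i = 0 is G_0 (size s(k)), blocks i \<in> [m] are G_i *)
definition LP_feasible ::
  "nat \<Rightarrow> nat \<Rightarrow> nat \<Rightarrow> (nat \<Rightarrow> mpoly) \<Rightarrow> (nat \<Rightarrow> mpoly) \<Rightarrow> nat \<Rightarrow> bool" where
  "LP_feasible n m l g h k \<longleftrightarrow>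
     (\<exists>(\<xi>::real) (G :: nat \<Rightarrow> monom \<Rightarrow> monom \<Rightarrow> real) (u :: nat \<Rightarrow> monom \<Rightarrow> real).
        (\<forall>i\<in>{0..m}. diag_on (Nset n (k - pceil (gg g i))) (G i) \<and>
                     psd_on (Nset n (k - pceil (gg g i))) (\<lambda>a b. G i a b - idm a b)) \<and>
        pconst \<xi> = quadpoly n k (G 0)
                   + (\<Sum>i\<in>{1..m}. g i * quadpoly n (k - pceil (g i)) (G i))
                   + (\<Sum>j\<in>{1..l}. h j * linpoly n (2 * (k - pceil (h j))) (u j)))"

(* localizing matrix M_d(q y), entry (alpha,beta); M_d(y) = M_d(1 y) *)
definition Mloc :: "mpoly \<Rightarrow> (monom \<Rightarrow> real) \<Rightarrow> monom \<Rightarrow> monom \<Rightarrow> real" where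
  "Mloc q y \<alpha> \<beta> = (\<Sum>\<gamma>\<in>Poly_Mapping.keys q. Poly_Mapping.lookup q \<gamma> * y (\<alpha> + \<beta> + \<gamma>))"

(* index set of the block-diagonal matrices D_k(y), P_k: pairs (block i, row alpha) *)
definition Jset :: "nat \<Rightarrow> nat \<Rightarrow> (nat \<Rightarrow> mpoly) \<Rightarrow> nat \<Rightarrow> (nat \<times> monom) set" where
  "Jset n m g k = {(i, \<alpha>). i \<le> m \<and> \<alpha> \<in> Nset n (k - pceil (gg g i))}"

definition Dmat :: "(nat \<Rightarrow> mpoly) \<Rightarrow> (monom \<Rightarrow> real) \<Rightarrow> (nat \<times> monom) \<Rightarrow> (nat \<times> monom) \<Rightarrow> real" where
  "Dmat g y a b = (if fst a = fst b then Mloc (gg g (fst a)) y (snd a) (snd b) else 0)"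

definition trace_on :: "'i set \<Rightarrow> ('i \<Rightarrow> 'i \<Rightarrow> real) \<Rightarrow> real" where
  "trace_on I M = (\<Sum>a\<in>I. M a a)"

definition mat_mult_on :: "'i set \<Rightarrow> ('i \<Rightarrow> 'i \<Rightarrow> real) \<Rightarrow> ('i \<Rightarrow> 'i \<Rightarrow> real) \<Rightarrow> ('i \<Rightarrow> 'i \<Rightarrow> real)" where
  "mat_mult_on I A B = (\<lambda>a c. \<Sum>b\<in>I. A a b * B b c)"

definition CTP :: "nat \<Rightarrow> mpoly \<Rightarrow> nat \<Rightarrow> nat \<Rightarrow> (nat \<Rightarrow> mpoly) \<Rightarrow> (nat \<Rightarrow> mpoly) \<Rightarrow> bool" where
  "CTP n f m l g h \<longleftrightarrow>
     (\<forall>k \<ge> kmin f m l g h. \<exists>(a::real) P. a > 0 \<and>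
        (\<forall>x\<in>Jset n m g k. \<forall>z\<in>Jset n m g k. fst x \<noteq> fst z \<longrightarrow> P x z = 0) \<and>
        pd_on (Jset n m g k) P \<and>
        (\<forall>y :: monom \<Rightarrow> real.
           (\<forall>j\<in>{1..l}. \<forall>\<alpha>\<in>Nset n (k - pceil (h j)). \<forall>\<beta>\<in>Nset n (k - pceil (h j)).
               Mloc (h j) y \<alpha> \<beta> = 0) \<and> y 0 = 1 \<longrightarrow>
           trace_on (Jset n m g k)
             (mat_mult_on (Jset n m g k) (mat_mult_on (Jset n m g k) P (Dmat g y)) P) = a))"

end

theory Submission
  imports Defs
begin


lemma mdeg_alt:
  assumes "finite S" "Poly_Mapping.keys \<alpha> \<subseteq> S"
  shows "mdeg \<alpha> = (\<Sum>t\<in>S. Poly_Mapping.lookup \<alpha> t)"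
  unfolding mdeg_def
  by (rule sum.mono_neutral_left) (use assms in \<open>auto simp: in_keys_iff\<close>)

lemma keys_add_nat: "Poly_Mapping.keys ((a::monom) + b) = Poly_Mapping.keys a \<union> Poly_Mapping.keys b"
  by (auto simp: in_keys_iff lookup_add)

lemma mdeg_add: "mdeg ((a::monom) + b) = mdeg a + mdeg b"
proof -
  let ?S = "Poly_Mapping.keys a \<union> Poly_Mapping.keys b"
  have "mdeg (a+b) = (\<Sum>t\<in>?S. Poly_Mapping.lookup (a+b) t)"
    by (rule mdeg_alt) (auto simp: keys_add_nat)
  also have "\<dots> = (\<Sum>t\<in>?S. Poly_Mapping.lookup a t) + (\<Sum>t\<in>?S. Poly_Mapping.lookup b t)"
    by (simp add: lookup_add sum.distrib)
  also have "\<dots> = mdeg a + mdeg b"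
    by (subst (1 2) mdeg_alt[of ?S]) auto
  finally show ?thesis .
qed

lemma mdeg_single: "mdeg (Poly_Mapping.single t c) = c"
  by (simp add: mdeg_def)

lemma mdeg_zero[simp]: "mdeg 0 = 0"
  by (simp add: mdeg_def)

lemma lookup_le_mdeg: "Poly_Mapping.lookup \<alpha> t \<le> mdeg \<alpha>"
proof (cases "t \<in> Poly_Mapping.keys \<alpha>")
  case True then show ?thesis unfolding mdeg_def
    by (intro member_le_sum) auto
next
  case False then show ?thesis by (simp add: in_keys_iff)
qed

lemma mdeg_eq_0: "mdeg \<alpha> = 0 \<longleftrightarrow> \<alpha> = 0"
proof
  assume "mdeg \<alpha> = 0"
  then show "\<alpha> = 0" using lookup_le_mdeg[of \<alpha>]
    by (intro poly_mapping_eqI) (metis le_zero_eq lookup_zero)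
qed simp

lemma dbl_inj: "(a::monom) + a = b + b \<Longrightarrow> a = b"
  by (rule poly_mapping_eqI) (metis lookup_add mult_2 mult_cancel_left zero_neq_numeral)

lemma single2: "Poly_Mapping.single t (2::nat) = Poly_Mapping.single t 1 + Poly_Mapping.single t 1"
  by (metis one_add_one single_add)

lemma sub_single:
  assumes "0 < Poly_Mapping.lookup \<beta> t"
  shows "Poly_Mapping.single t 1 + (\<beta> - Poly_Mapping.single t 1) = (\<beta>::monom)"
  using assms by (intro poly_mapping_eqI) (auto simp: lookup_add lookup_minus lookup_single when_def)

lemma add_single_eq_iff:
  "(Poly_Mapping.single t 1 + \<alpha> = (\<beta>::monom)) \<longleftrightarrow> (0 < Poly_Mapping.lookup \<beta> t \<and> \<alpha> = \<beta> - Poly_Mapping.single t 1)"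
proof
  assume h: "Poly_Mapping.single t 1 + \<alpha> = \<beta>"
  then have "0 < Poly_Mapping.lookup \<beta> t" by (auto simp: lookup_add)
  moreover have "\<alpha> = \<beta> - Poly_Mapping.single t 1" using h
    by (intro poly_mapping_eqI) (auto simp: lookup_add lookup_minus)
  ultimately show "0 < Poly_Mapping.lookup \<beta> t \<and> \<alpha> = \<beta> - Poly_Mapping.single t 1" by simp
qed (use sub_single in auto)

lemma finite_Nset: "finite (Nset n d)"
proof -
  have "inj_on (\<lambda>\<alpha>. restrict (Poly_Mapping.lookup \<alpha>) {1..n}) (Nset n d)"
  proof (rule inj_onI)
    fix a b assume a: "a \<in> Nset n d" and b: "b \<in> Nset n d"
      and e: "restrict (Poly_Mapping.lookup a) {1..n} = restrict (Poly_Mapping.lookup b) {1..n}"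
    show "a = b"
    proof (rule poly_mapping_eqI)
      fix t show "Poly_Mapping.lookup a t = Poly_Mapping.lookup b t"
      proof (cases "t \<in> {1..n}")
        case True then show ?thesis using e by (metis restrict_apply')
      next
        case False then show ?thesis using a b unfolding Nset_def
          by (metis (no_types, lifting) in_keys_iff mem_Collect_eq subsetD)
      qed
    qed
  qed
  moreover have "(\<lambda>\<alpha>. restrict (Poly_Mapping.lookup \<alpha>) {1..n}) ` Nset n d \<subseteq> PiE {1..n} (\<lambda>_. {0..d})"
    unfolding Nset_def by (auto intro: le_trans[OF lookup_le_mdeg])
  ultimately show ?thesis
    by (metis finite_PiE finite_atLeastAtMost finite_imageD finite_subset)
qed

lemma zero_Nset[simp]: "0 \<in> Nset n d"
  by (simp add: Nset_def)

lemma Nset_mono: "d \<le> e \<Longrightarrow> Nset n d \<subseteq> Nset n e"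
  by (auto simp: Nset_def)

lemma Nset_add: "a \<in> Nset n d \<Longrightarrow> b \<in> Nset n e \<Longrightarrow> a + b \<in> Nset n (d+e)"
  by (auto simp: Nset_def mdeg_add keys_add_nat)

lemma sub_single_Nset:
  assumes "\<beta> \<in> Nset n k" "0 < Poly_Mapping.lookup \<beta> t"
  shows "\<beta> - Poly_Mapping.single t 1 \<in> Nset n (k - 1)"
    and "mdeg (\<beta> - Poly_Mapping.single t 1) = mdeg \<beta> - 1"
proof -
  have e: "\<beta> = Poly_Mapping.single t 1 + (\<beta> - Poly_Mapping.single t 1)" using sub_single assms(2) by simp
  then have m: "mdeg \<beta> = 1 + mdeg (\<beta> - Poly_Mapping.single t 1)"
    by (metis mdeg_add mdeg_single)
  then show "mdeg (\<beta> - Poly_Mapping.single t 1) = mdeg \<beta> - 1" by simp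
  have "Poly_Mapping.keys (\<beta> - Poly_Mapping.single t 1) \<subseteq> Poly_Mapping.keys \<beta>"
    using e keys_add_nat by (metis Un_upper2)
  then show "\<beta> - Poly_Mapping.single t 1 \<in> Nset n (k - 1)" using assms(1) m by (auto simp: Nset_def)
qed


lemma lookup_pconst_mult: "Poly_Mapping.lookup (pconst c * p) k = c * Poly_Mapping.lookup p k"
proof -
  have "pconst c * p = Poly_Mapping.map ((*) c) p"
    by (simp add: pconst_def mult_map_scale_conv_mult)
  then show ?thesis by (simp add: map.rep_eq when_def)
qed

lemma pconst_mult: "pconst a * pconst b = pconst (a * b)"
  by (simp add: pconst_def mult_single)

lemma pconst_one: "pconst 1 = 1"
  by (simp add: pconst_def)

lemma pconst_zero: "pconst 0 = 0"
  by (simp add: pconst_def)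

lemma pconst_uminus: "pconst (- a) = - pconst a"
  by (simp add: pconst_def single_uminus)

lemma pconst_Xm: "pconst c * Xm \<mu> = Poly_Mapping.single \<mu> c"
  by (simp add: pconst_def Xm_def mult_single)

lemma lookup_pconst: "Poly_Mapping.lookup (pconst c) k = (if k = 0 then c else 0)"
  by (simp add: pconst_def lookup_single when_def)

lemma quadpoly_diag:
  assumes "\<forall>\<alpha> \<beta>. \<alpha> \<noteq> \<beta> \<longrightarrow> G \<alpha> \<beta> = 0"
  shows "quadpoly n d G = (\<Sum>\<alpha>\<in>Nset n d. Poly_Mapping.single (\<alpha> + \<alpha>) (G \<alpha> \<alpha>))"
  unfolding quadpoly_def
proof (rule sum.cong[OF refl])
  fix \<alpha> assume a: "\<alpha> \<in> Nset n d"
  have "(\<Sum>\<beta>\<in>Nset n d. pconst (G \<alpha> \<beta>) * Xm (\<alpha> + \<beta>)) =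
        (\<Sum>\<beta>\<in>Nset n d. if \<beta> = \<alpha> then Poly_Mapping.single (\<alpha> + \<alpha>) (G \<alpha> \<alpha>) else 0)"
    using assms by (intro sum.cong) (auto simp: pconst_Xm)
  also have "\<dots> = Poly_Mapping.single (\<alpha> + \<alpha>) (G \<alpha> \<alpha>)"
    using finite_Nset a by (simp add: sum.delta)
  finally show "(\<Sum>\<beta>\<in>Nset n d. pconst (G \<alpha> \<beta>) * Xm (\<alpha> + \<beta>)) = Poly_Mapping.single (\<alpha> + \<alpha>) (G \<alpha> \<alpha>)" .
qed

lemma linpoly_zero: "linpoly n d (\<lambda>_. 0) = 0"
  by (simp add: linpoly_def pconst_zero)

lemma poly_monomials: "(p::mpoly) = (\<Sum>\<gamma>\<in>Poly_Mapping.keys p. Poly_Mapping.single \<gamma> (Poly_Mapping.lookup p \<gamma>))"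
proof (rule poly_mapping_eqI)
  fix k
  show "Poly_Mapping.lookup p k = Poly_Mapping.lookup (\<Sum>\<gamma>\<in>Poly_Mapping.keys p. Poly_Mapping.single \<gamma> (Poly_Mapping.lookup p \<gamma>)) k"
    by (auto simp: lookup_sum lookup_single when_def in_keys_iff)
qed

definition Lf :: "(monom \<Rightarrow> real) \<Rightarrow> mpoly \<Rightarrow> real" where
  "Lf y p = (\<Sum>\<gamma>\<in>Poly_Mapping.keys p. Poly_Mapping.lookup p \<gamma> * y \<gamma>)"

lemma Lf_superset: "finite K \<Longrightarrow> Poly_Mapping.keys p \<subseteq> K \<Longrightarrow> Lf y p = (\<Sum>\<gamma>\<in>K. Poly_Mapping.lookup p \<gamma> * y \<gamma>)"
  unfolding Lf_def by (rule sum.mono_neutral_left) (auto simp: in_keys_iff)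

lemma Lf_add: "Lf y (p + q) = Lf y p + Lf y q"
proof -
  let ?K = "Poly_Mapping.keys p \<union> Poly_Mapping.keys q"
  have "Lf y (p + q) = (\<Sum>\<gamma>\<in>?K. Poly_Mapping.lookup (p+q) \<gamma> * y \<gamma>)"
    by (rule Lf_superset) (auto dest: subsetD[OF keys_add])
  also have "\<dots> = (\<Sum>\<gamma>\<in>?K. Poly_Mapping.lookup p \<gamma> * y \<gamma>) + (\<Sum>\<gamma>\<in>?K. Poly_Mapping.lookup q \<gamma> * y \<gamma>)"
    by (simp add: lookup_add sum.distrib distrib_right)
  also have "\<dots> = Lf y p + Lf y q"
    by (subst (1 2) Lf_superset[of ?K]) auto
  finally show ?thesis .
qed

lemma Lf_zero[simp]: "Lf y 0 = 0"
  by (simp add: Lf_def)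

lemma Lf_sum: "Lf y (\<Sum>i\<in>I. p i) = (\<Sum>i\<in>I. Lf y (p i))"
  by (induction I rule: infinite_finite_induct) (auto simp: Lf_add)

lemma Lf_single: "Lf y (Poly_Mapping.single \<mu> c) = c * y \<mu>"
  by (simp add: Lf_def)

lemma Lf_pconst: "Lf y (pconst c) = c * y 0"
  by (simp add: pconst_def Lf_single)

lemma Lf_scale: "Lf y (pconst c * p) = c * Lf y p"
proof -
  have "Lf y (pconst c * p) = (\<Sum>\<gamma>\<in>Poly_Mapping.keys p. Poly_Mapping.lookup (pconst c * p) \<gamma> * y \<gamma>)"
    by (rule Lf_superset) (auto simp: in_keys_iff lookup_pconst_mult)
  then show ?thesis by (simp add: lookup_pconst_mult Lf_def sum_distrib_left mult.assoc)
qed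

lemma Mloc_Lf: "Mloc q y \<alpha> \<beta> = Lf y (q * Poly_Mapping.single (\<alpha> + \<beta>) 1)"
proof -
  have "q * Poly_Mapping.single (\<alpha> + \<beta>) 1 =
     (\<Sum>\<gamma>\<in>Poly_Mapping.keys q. Poly_Mapping.single (\<gamma> + (\<alpha> + \<beta>)) (Poly_Mapping.lookup q \<gamma>))"
    by (subst poly_monomials[of q]) (simp add: sum_distrib_right mult_single)
  then show ?thesis
    by (simp add: Lf_sum Lf_single Mloc_def add.commute add.left_commute)
qed


definition Dpoly :: "monom set \<Rightarrow> (monom \<Rightarrow> real) \<Rightarrow> mpoly" where
  "Dpoly A w = (\<Sum>\<alpha>\<in>A. Poly_Mapping.single (\<alpha> + \<alpha>) (w \<alpha>))"

lemma keys_Dpoly: "Poly_Mapping.keys (Dpoly A w) \<subseteq> (\<lambda>\<alpha>. \<alpha> + \<alpha>) ` A"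
  unfolding Dpoly_def using keys_sum[of "\<lambda>\<alpha>. Poly_Mapping.single (\<alpha> + \<alpha>) (w \<alpha>)" A]
  by (auto split: if_splits)

lemma lookup_Dpoly_dbl:
  assumes "finite A"
  shows "Poly_Mapping.lookup (Dpoly A w) (\<beta> + \<beta>) = (if \<beta> \<in> A then w \<beta> else 0)"
proof -
  have "Poly_Mapping.lookup (Dpoly A w) (\<beta> + \<beta>) = (\<Sum>\<alpha>\<in>A. if \<alpha> = \<beta> then w \<alpha> else 0)"
    unfolding Dpoly_def lookup_sum
    by (intro sum.cong) (auto simp: lookup_single when_def dest: dbl_inj)
  also have "\<dots> = (if \<beta> \<in> A then w \<beta> else 0)" using assms by (simp add: sum.delta')
  finally show ?thesis .
qed

lemma lookup_sq_term:
  "Poly_Mapping.lookup (Poly_Mapping.single (Poly_Mapping.single t 2 + (\<alpha> + \<alpha>)) (c::real)) ((\<beta>::monom) + \<beta>) =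
       (if \<alpha> = \<beta> - Poly_Mapping.single t 1 \<and> 0 < Poly_Mapping.lookup \<beta> t then c else 0)"
proof -
    have "(Poly_Mapping.single t 2 + (\<alpha> + \<alpha>) = \<beta> + \<beta>) \<longleftrightarrow>
          ((Poly_Mapping.single t 1 + \<alpha>) + (Poly_Mapping.single t 1 + \<alpha>) = \<beta> + \<beta>)"
      by (simp add: single2 ac_simps)
    also have "\<dots> \<longleftrightarrow> Poly_Mapping.single t 1 + \<alpha> = \<beta>" using dbl_inj by blast
    also have "\<dots> \<longleftrightarrow> (\<alpha> = \<beta> - Poly_Mapping.single t 1 \<and> 0 < Poly_Mapping.lookup \<beta> t)"
      using add_single_eq_iff[of t \<alpha> \<beta>] by blast
    finally have eq: "(Poly_Mapping.single t 2 + (\<alpha> + \<alpha>) = \<beta> + \<beta>) \<longleftrightarrow> (\<alpha> = \<beta> - Poly_Mapping.single t 1 \<and> 0 < Poly_Mapping.lookup \<beta> t)" .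
    show ?thesis
      unfolding lookup_single when_def eq by simp
qed

lemma lookup_sq_Dpoly:
  assumes "finite A" "finite T"
  shows "Poly_Mapping.lookup (sqnorm T * Dpoly A w) (\<beta> + \<beta>) =
    (\<Sum>t\<in>T. if 0 < Poly_Mapping.lookup \<beta> t \<and> \<beta> - Poly_Mapping.single t 1 \<in> A
             then w (\<beta> - Poly_Mapping.single t 1) else 0)"
proof -
  have "sqnorm T * Dpoly A w = (\<Sum>t\<in>T. \<Sum>\<alpha>\<in>A. Poly_Mapping.single (Poly_Mapping.single t 2 + (\<alpha> + \<alpha>)) (w \<alpha>))"
    unfolding sqnorm_def Dpoly_def Xm_def
    by (simp add: sum_distrib_right sum_distrib_left mult_single sum.swap[of _ A T])
  then have "Poly_Mapping.lookup (sqnorm T * Dpoly A w) (\<beta> + \<beta>) =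
      (\<Sum>t\<in>T. \<Sum>\<alpha>\<in>A. if \<alpha> = \<beta> - Poly_Mapping.single t 1 \<and> 0 < Poly_Mapping.lookup \<beta> t then w \<alpha> else 0)"
    by (simp add: lookup_sum lookup_sq_term del: One_nat_def)
  also have "\<dots> = (\<Sum>t\<in>T. if 0 < Poly_Mapping.lookup \<beta> t \<and> \<beta> - Poly_Mapping.single t 1 \<in> A
             then w (\<beta> - Poly_Mapping.single t 1) else 0)"
  proof (intro sum.cong refl)
    fix t show "(\<Sum>\<alpha>\<in>A. if \<alpha> = \<beta> - Poly_Mapping.single t 1 \<and> 0 < Poly_Mapping.lookup \<beta> t then w \<alpha> else 0) =
      (if 0 < Poly_Mapping.lookup \<beta> t \<and> \<beta> - Poly_Mapping.single t 1 \<in> A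
             then w (\<beta> - Poly_Mapping.single t 1) else 0)"
      using assms(1) by (cases "0 < Poly_Mapping.lookup \<beta> t") (simp_all add: sum.delta' del: One_nat_def)
  qed
  finally show ?thesis .
qed



lemma pdeg_le: "(\<forall>\<mu>\<in>Poly_Mapping.keys p. mdeg \<mu> \<le> d) \<Longrightarrow> pdeg p \<le> d"
  unfolding pdeg_def by (subst Max_le_iff) auto

lemma pdeg_ge: "\<mu> \<in> Poly_Mapping.keys p \<Longrightarrow> mdeg \<mu> \<le> pdeg p"
  unfolding pdeg_def by (rule Max_ge) auto

lemma keys_sqnorm: "Poly_Mapping.keys (sqnorm T) \<subseteq> {Poly_Mapping.single t 2 | t. t \<in> T}"
  unfolding sqnorm_def Xm_def using keys_sum[of "\<lambda>t. Poly_Mapping.single (Poly_Mapping.single t (2::nat)) (1::real)" T]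
  by auto

lemma keys_pconst_mult: "Poly_Mapping.keys (pconst c * p) \<subseteq> Poly_Mapping.keys p"
  by (auto simp: in_keys_iff lookup_pconst_mult)

lemma keys_pconst: "Poly_Mapping.keys (pconst c) \<subseteq> {0}"
  by (simp add: pconst_def)

lemma keys_gform: "Poly_Mapping.keys (pconst c + pconst s * sqnorm T) \<subseteq> {0} \<union> {Poly_Mapping.single t 2 | t. t \<in> T}"
proof
  fix \<mu> assume "\<mu> \<in> Poly_Mapping.keys (pconst c + pconst s * sqnorm T)"
  then have "\<mu> \<in> Poly_Mapping.keys (pconst c) \<or> \<mu> \<in> Poly_Mapping.keys (sqnorm T)"
    using keys_add[of "pconst c" "pconst s * sqnorm T"] keys_pconst_mult[of s "sqnorm T"] by blast
  then show "\<mu> \<in> {0} \<union> {Poly_Mapping.single t 2 | t. t \<in> T}"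
    using keys_pconst[of c] keys_sqnorm[of T] by blast
qed

lemma pceil_gform_le1: "pceil (pconst c + pconst s * sqnorm T) \<le> 1"
proof -
  have "pdeg (pconst c + pconst s * sqnorm T) \<le> 2"
  proof (rule pdeg_le, intro ballI)
    fix \<mu> assume "\<mu> \<in> Poly_Mapping.keys (pconst c + pconst s * sqnorm T)"
    then consider "\<mu> = 0" | t where "\<mu> = Poly_Mapping.single t 2" using keys_gform[of c s T] by blast
    then show "mdeg \<mu> \<le> 2" by cases (auto simp: mdeg_single)
  qed
  then show ?thesis unfolding pceil_def by simp
qed

definition Eset :: "nat \<Rightarrow> nat \<Rightarrow> monom set" where
  "Eset n d = (\<lambda>\<alpha>. \<alpha> + \<alpha>) ` Nset n d"

lemma zero_Eset: "(0::monom) \<in> Eset n d"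
  unfolding Eset_def by (rule image_eqI[of _ _ 0]) simp_all

lemma keys_E_pceil:
  assumes m: "\<mu> \<in> Poly_Mapping.keys q" and t: "t \<in> {1..n}" and e: "\<mu> = Poly_Mapping.single t 2"
  shows "\<mu> \<in> Eset n (pceil q)"
proof -
  have "mdeg \<mu> \<le> pdeg q" by (rule pdeg_ge[OF m])
  then have "2 \<le> pdeg q" unfolding e mdeg_single .
  then have p: "1 \<le> pceil q" unfolding pceil_def by simp
  have "mdeg (Poly_Mapping.single t (1::nat)) = 1" by (rule mdeg_single)
  then have "Poly_Mapping.single t 1 \<in> Nset n 1" using t unfolding Nset_def by simp
  then have "Poly_Mapping.single t 1 \<in> Nset n (pceil q)"
    using Nset_mono[OF p] by blast
  then show ?thesis unfolding Eset_def e single2 by (rule imageI)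
qed

lemma keys_gform_E:
  assumes "T \<subseteq> {1..n}"
  shows "Poly_Mapping.keys (pconst c + pconst s * sqnorm T) \<subseteq> Eset n (pceil (pconst c + pconst s * sqnorm T))"
proof
  fix \<mu> assume m: "\<mu> \<in> Poly_Mapping.keys (pconst c + pconst s * sqnorm T)"
  then consider "\<mu> = 0" | t where "t \<in> T" "\<mu> = Poly_Mapping.single t 2" using keys_gform[of c s T] by blast
  then show "\<mu> \<in> Eset n (pceil (pconst c + pconst s * sqnorm T))"
  proof cases
    case 1 then show ?thesis using zero_Eset by simp
  next
    case 2
    then show ?thesis using keys_E_pceil[OF m _ 2(2)] assms by blast
  qed
qed

lemma Eset_add: "a \<in> Eset n d \<Longrightarrow> b \<in> Eset n e \<Longrightarrow> a + b \<in> Eset n (d + e)"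
  unfolding Eset_def
proof (elim imageE)
  fix x y assume "x \<in> Nset n d" "y \<in> Nset n e" "a = x + x" "b = y + y"
  then show "a + b \<in> (\<lambda>\<alpha>. \<alpha> + \<alpha>) ` Nset n (d + e)"
    by (intro image_eqI[of _ _ "x + y"]) (auto simp: ac_simps intro: Nset_add)
qed

lemma keys_mult_E:
  assumes "Poly_Mapping.keys p \<subseteq> Eset n d" "Poly_Mapping.keys q \<subseteq> Eset n e"
  shows "Poly_Mapping.keys (p * q) \<subseteq> Eset n (d + e)"
proof
  fix \<mu> assume "\<mu> \<in> Poly_Mapping.keys (p * q)"
  then obtain a b where "a \<in> Poly_Mapping.keys p" "b \<in> Poly_Mapping.keys q" "\<mu> = a + b"
    using keys_mult[of p q] by blast
  then show "\<mu> \<in> Eset n (d + e)" using assms Eset_add by blast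
qed

lemma keys_Dpoly_E: "Poly_Mapping.keys (Dpoly (Nset n d) w) \<subseteq> Eset n d"
  using keys_Dpoly unfolding Eset_def .

lemma poly_from_E:
  assumes "Poly_Mapping.keys (P::mpoly) \<subseteq> Eset n d"
  shows "P = Dpoly (Nset n d) (\<lambda>\<alpha>. Poly_Mapping.lookup P (\<alpha> + \<alpha>))"
proof (rule poly_mapping_eqI)
  fix \<mu>
  show "Poly_Mapping.lookup P \<mu> = Poly_Mapping.lookup (Dpoly (Nset n d) (\<lambda>\<alpha>. Poly_Mapping.lookup P (\<alpha> + \<alpha>))) \<mu>"
  proof (cases "\<mu> \<in> Eset n d")
    case True
    then obtain \<beta> where b: "\<beta> \<in> Nset n d" "\<mu> = \<beta> + \<beta>" unfolding Eset_def by blast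
    have "Poly_Mapping.lookup (Dpoly (Nset n d) (\<lambda>\<alpha>. Poly_Mapping.lookup P (\<alpha> + \<alpha>))) (\<beta> + \<beta>)
       = Poly_Mapping.lookup P (\<beta> + \<beta>)"
      using lookup_Dpoly_dbl[OF finite_Nset, of n d "\<lambda>\<alpha>. Poly_Mapping.lookup P (\<alpha> + \<alpha>)" \<beta>] b(1) by simp
    then show ?thesis unfolding b(2) by simp
  next
    case False
    have k1: "\<mu> \<notin> Poly_Mapping.keys P" using False assms by blast
    have k2: "\<mu> \<notin> Poly_Mapping.keys (Dpoly (Nset n d) (\<lambda>\<alpha>. Poly_Mapping.lookup P (\<alpha> + \<alpha>)))"
      using False keys_Dpoly_E[of n d "\<lambda>\<alpha>. Poly_Mapping.lookup P (\<alpha> + \<alpha>)"] by blast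
    show ?thesis using k1 k2 unfolding in_keys_iff by simp
  qed
qed

lemma quadpoly_Dpoly:
  "quadpoly n d (\<lambda>\<alpha> \<beta>. if \<alpha> = \<beta> then w \<alpha> else 0) = Dpoly (Nset n d) w"
  by (subst quadpoly_diag) (auto simp: Dpoly_def)


lemma lookup_gD:
  assumes T: "T \<subseteq> {1..n}" and b: "\<beta> \<in> Nset n k" and d: "k - 1 \<le> d"
  shows "Poly_Mapping.lookup ((pconst c + pconst s * sqnorm T) * Dpoly (Nset n d) (\<lambda>\<alpha>. W (mdeg \<alpha>))) (\<beta> + \<beta>)
    = c * (if \<beta> \<in> Nset n d then W (mdeg \<beta>) else 0)
      + s * (W (mdeg \<beta> - 1) * real (card {t\<in>T. 0 < Poly_Mapping.lookup \<beta> t}))"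
proof -
  have fT: "finite T" using T finite_subset by blast
  have "(\<Sum>t\<in>T. if 0 < Poly_Mapping.lookup \<beta> t \<and> \<beta> - Poly_Mapping.single t 1 \<in> Nset n d
             then W (mdeg (\<beta> - Poly_Mapping.single t 1)) else 0)
      = (\<Sum>t\<in>T. if 0 < Poly_Mapping.lookup \<beta> t then W (mdeg \<beta> - 1) else 0)"
  proof (intro sum.cong refl)
    fix t
    show "(if 0 < Poly_Mapping.lookup \<beta> t \<and> \<beta> - Poly_Mapping.single t 1 \<in> Nset n d
             then W (mdeg (\<beta> - Poly_Mapping.single t 1)) else 0) =
          (if 0 < Poly_Mapping.lookup \<beta> t then W (mdeg \<beta> - 1) else 0)"
      using sub_single_Nset[OF b, of t] Nset_mono[OF d] by auto
  qed
  also have "\<dots> = W (mdeg \<beta> - 1) * real (card {t\<in>T. 0 < Poly_Mapping.lookup \<beta> t})"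
    using fT by (simp add: sum.If_cases Int_def conj_commute)
  finally have sq: "Poly_Mapping.lookup (sqnorm T * Dpoly (Nset n d) (\<lambda>\<alpha>. W (mdeg \<alpha>))) (\<beta> + \<beta>)
      = W (mdeg \<beta> - 1) * real (card {t\<in>T. 0 < Poly_Mapping.lookup \<beta> t})"
    by (simp add: lookup_sq_Dpoly[OF finite_Nset fT] del: One_nat_def)
  show ?thesis
    by (simp add: distrib_right lookup_add mult.assoc lookup_pconst_mult sq lookup_Dpoly_dbl finite_Nset
         del: One_nat_def)
qed





lemma pceil_one: "pceil 1 = 0"
  unfolding pceil_def pdeg_def by simp

lemma gg0: "pceil (gg g 0) = 0"
  by (simp add: gg_def pceil_one)

lemma cert:
  fixes cc ss :: "nat \<Rightarrow> real" and TT :: "nat \<Rightarrow> nat set" and W :: "nat \<Rightarrow> nat \<Rightarrow> real"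
  assumes gf: "\<forall>i\<in>{1..m}. g i = pconst (cc i) + pconst (ss i) * sqnorm (TT i)"
    and TT: "\<forall>i\<in>{1..m}. TT i \<subseteq> {1..n}"
    and kge: "\<forall>i\<in>{1..m}. pceil (g i) \<le> k"
    and W1: "\<forall>i\<in>{1..m}. \<forall>j. 1 \<le> W i j"
    and coef: "\<forall>\<beta>\<in>Nset n k. \<beta> \<noteq> 0 \<longrightarrow> 1 \<le> - (\<Sum>i\<in>{1..m}. cc i * (if \<beta> \<in> Nset n (k - pceil (g i)) then W i (mdeg \<beta>) else 0)
                 + ss i * (W i (mdeg \<beta> - 1) * real (card {t\<in>TT i. 0 < Poly_Mapping.lookup \<beta> t})))"
  shows "\<exists>G. (\<forall>i \<alpha> \<beta>. \<alpha> \<noteq> \<beta> \<longrightarrow> G i \<alpha> \<beta> = 0) \<and>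
     (\<forall>i\<in>{0..m}. \<forall>\<alpha>\<in>Nset n (k - pceil (gg g i)). 1 \<le> G i \<alpha> \<alpha>) \<and>
     pconst (1 + (\<Sum>i\<in>{1..m}. cc i * W i 0)) = quadpoly n k (G 0) + (\<Sum>i\<in>{1..m}. g i * quadpoly n (k - pceil (g i)) (G i))"
proof -
  define \<xi> where "\<xi> = 1 + (\<Sum>i\<in>{1..m}. cc i * W i 0)"
  define D where "D i = Dpoly (Nset n (k - pceil (g i))) (\<lambda>\<alpha>. W i (mdeg \<alpha>))" for i
  define P where "P = pconst \<xi> - (\<Sum>i\<in>{1..m}. g i * D i)"
  have keysP: "Poly_Mapping.keys P \<subseteq> Eset n k"
  proof -
    have k0: "Poly_Mapping.keys (pconst \<xi>) \<subseteq> Eset n k"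
      using keys_pconst[of \<xi>] zero_Eset[of n k] by blast
    have ki: "Poly_Mapping.keys (g i * D i) \<subseteq> Eset n k" if i: "i \<in> {1..m}" for i
    proof -
      have gi: "g i = pconst (cc i) + pconst (ss i) * sqnorm (TT i)" using gf i by blast
      have T: "TT i \<subseteq> {1..n}" using TT i by blast
      have "Poly_Mapping.keys (g i) \<subseteq> Eset n (pceil (g i))"
        unfolding gi by (rule keys_gform_E[OF T])
      from keys_mult_E[OF this keys_Dpoly_E]
      have "Poly_Mapping.keys (g i * D i) \<subseteq> Eset n (pceil (g i) + (k - pceil (g i)))"
        unfolding D_def .
      moreover have "pceil (g i) + (k - pceil (g i)) = k" using kge i by simp
      ultimately show ?thesis by simp
    qed
    have ks: "Poly_Mapping.keys (\<Sum>i\<in>{1..m}. g i * D i) \<subseteq> Eset n k"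
    proof
      fix \<mu> assume "\<mu> \<in> Poly_Mapping.keys (\<Sum>i\<in>{1..m}. g i * D i)"
      then obtain i where "i \<in> {1..m}" "\<mu> \<in> Poly_Mapping.keys (g i * D i)"
        using keys_sum[of "\<lambda>i. g i * D i" "{1..m}"] by blast
      then show "\<mu> \<in> Eset n k" using ki by blast
    qed
    have "Poly_Mapping.keys P \<subseteq> Poly_Mapping.keys (pconst \<xi>) \<union> Poly_Mapping.keys (\<Sum>i\<in>{1..m}. g i * D i)"
      unfolding P_def by (rule keys_diff)
    then show ?thesis using k0 ks by blast
  qed
  have lookP: "1 \<le> Poly_Mapping.lookup P (\<beta> + \<beta>)" if b: "\<beta> \<in> Nset n k" for \<beta>
  proof -
    have gD: "Poly_Mapping.lookup (g i * D i) (\<beta> + \<beta>) =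
       cc i * (if \<beta> \<in> Nset n (k - pceil (g i)) then W i (mdeg \<beta>) else 0)
                 + ss i * (W i (mdeg \<beta> - 1) * real (card {t\<in>TT i. 0 < Poly_Mapping.lookup \<beta> t}))"
      if i: "i \<in> {1..m}" for i
    proof -
      have gi: "g i = pconst (cc i) + pconst (ss i) * sqnorm (TT i)" using gf i by blast
      have "pceil (g i) \<le> 1" unfolding gi by (rule pceil_gform_le1)
      then have d: "k - 1 \<le> k - pceil (g i)" by simp
      have T: "TT i \<subseteq> {1..n}" using TT i by blast
      show ?thesis unfolding D_def using lookup_gD[OF T b d, of "cc i" "ss i" "W i"] unfolding gi[symmetric] .
    qed
    have LP: "Poly_Mapping.lookup P (\<beta> + \<beta>) = (if \<beta> = 0 then \<xi> else 0) - (\<Sum>i\<in>{1..m}. cc i * (if \<beta> \<in> Nset n (k - pceil (g i)) then W i (mdeg \<beta>) else 0)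
                 + ss i * (W i (mdeg \<beta> - 1) * real (card {t\<in>TT i. 0 < Poly_Mapping.lookup \<beta> t})))"
    proof -
      have z: "(\<beta> + \<beta> = 0) = (\<beta> = 0)" by (metis add_0 dbl_inj)
      have s: "(\<Sum>i\<in>{1..m}. Poly_Mapping.lookup (g i * D i) (\<beta> + \<beta>)) = (\<Sum>i\<in>{1..m}. cc i * (if \<beta> \<in> Nset n (k - pceil (g i)) then W i (mdeg \<beta>) else 0)
                 + ss i * (W i (mdeg \<beta> - 1) * real (card {t\<in>TT i. 0 < Poly_Mapping.lookup \<beta> t})))"
        by (rule sum.cong[OF refl]) (rule gD)
      show ?thesis unfolding P_def lookup_minus lookup_sum lookup_pconst z s ..
    qed
    show ?thesis
    proof (cases "\<beta> = 0")
      case True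
      have "(\<Sum>i\<in>{1..m}. cc i * (if \<beta> \<in> Nset n (k - pceil (g i)) then W i (mdeg \<beta>) else 0)
                 + ss i * (W i (mdeg \<beta> - 1) * real (card {t\<in>TT i. 0 < Poly_Mapping.lookup \<beta> t})))
            = (\<Sum>i\<in>{1..m}. cc i * W i 0)"
        using True by (intro sum.cong refl) simp
      then show ?thesis using LP True by (simp add: \<xi>_def)
    next
      case False
      then have "1 \<le> - (\<Sum>i\<in>{1..m}. cc i * (if \<beta> \<in> Nset n (k - pceil (g i)) then W i (mdeg \<beta>) else 0)
                 + ss i * (W i (mdeg \<beta> - 1) * real (card {t\<in>TT i. 0 < Poly_Mapping.lookup \<beta> t})))"
        using coef b by blast
      then show ?thesis using LP False by simp
    qed
  qed
  define G where "G i = (if i = 0 then (\<lambda>\<alpha> \<beta>. if \<alpha> = \<beta> then Poly_Mapping.lookup P (\<alpha> + \<alpha>) else 0)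
                          else (\<lambda>\<alpha> \<beta>. if \<alpha> = \<beta> then W i (mdeg \<alpha>) else 0))" for i
  have q0: "quadpoly n k (G 0) = P"
    using poly_from_E[OF keysP] by (simp add: G_def quadpoly_Dpoly)
  have qi: "quadpoly n (k - pceil (g i)) (G i) = D i" if "i \<in> {1..m}" for i
    using that by (simp add: G_def quadpoly_Dpoly D_def)
  have "pconst \<xi> = quadpoly n k (G 0) + (\<Sum>i\<in>{1..m}. g i * quadpoly n (k - pceil (g i)) (G i))"
    by (simp add: q0 qi P_def)
  moreover have "\<forall>i \<alpha> \<beta>. \<alpha> \<noteq> \<beta> \<longrightarrow> G i \<alpha> \<beta> = 0" by (simp add: G_def)
  moreover have "\<forall>i\<in>{0..m}. \<forall>\<alpha>\<in>Nset n (k - pceil (gg g i)). 1 \<le> G i \<alpha> \<alpha>"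
  proof (intro ballI)
    fix i \<alpha> assume i: "i \<in> {0..m}" and a: "\<alpha> \<in> Nset n (k - pceil (gg g i))"
    show "1 \<le> G i \<alpha> \<alpha>"
    proof (cases "i = 0")
      case True then show ?thesis using a lookP by (simp add: G_def gg0)
    next
      case False then show ?thesis using W1 i by (simp add: G_def)
    qed
  qed
  ultimately show ?thesis unfolding \<xi>_def[symmetric] by (intro exI[of _ G]) blast
qed



lemma sum_split3:
  assumes "2 * r \<le> (m::nat)"
  shows "(\<Sum>i\<in>{1..m}. f i) = (\<Sum>i\<in>{1..r}. f i + f (i + r)) + (\<Sum>i\<in>{2*r+1..m}. (f i :: real))"
proof -
  have e1: "{1..m} = {1..2*r} \<union> {2*r+1..m}" using assms by auto
  have e2: "{1..2*r} = {1..r} \<union> {r+1..2*r}" by auto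
  have e3: "{r+1..2*r} = (\<lambda>i. i + r) ` {1..r}"
    using image_add_atLeastAtMost[of r 1 r] by (simp add: add.commute mult_2)
  have "(\<Sum>i\<in>{r+1..2*r}. f i) = (\<Sum>i\<in>{1..r}. f (i + r))"
    unfolding e3 by (subst sum.reindex) (auto simp: inj_on_def)
  moreover have "(\<Sum>i\<in>{1..m}. f i) = (\<Sum>i\<in>{1..r}. f i) + (\<Sum>i\<in>{r+1..2*r}. f i) + (\<Sum>i\<in>{2*r+1..m}. f i)"
    unfolding e1 e2 by (subst sum.union_disjoint, auto)+
  ultimately show ?thesis by (simp add: sum.distrib)
qed

lemma diag_quad:
  assumes "\<forall>a\<in>I. \<forall>b\<in>I. a \<noteq> b \<longrightarrow> M a b = 0" "finite I"
  shows "(\<Sum>a\<in>I. \<Sum>b\<in>I. v a * M a b * v b) = (\<Sum>a\<in>I. v a * M a a * (v a::real))"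
proof (rule sum.cong[OF refl])
  fix a assume a: "a \<in> I"
  have "(\<Sum>b\<in>I. v a * M a b * v b) = (\<Sum>b\<in>I. if b = a then v a * M a a * v a else 0)"
    using assms(1) a by (intro sum.cong) auto
  also have "\<dots> = v a * M a a * v a" using assms(2) a by (simp add: sum.delta')
  finally show "(\<Sum>b\<in>I. v a * M a b * v b) = v a * M a a * v a" .
qed

lemma Lf_quad:
  assumes "\<forall>\<alpha> \<beta>. \<alpha> \<noteq> \<beta> \<longrightarrow> G \<alpha> \<beta> = 0"
  shows "Lf y (q * quadpoly n d G) = (\<Sum>\<alpha>\<in>Nset n d. G \<alpha> \<alpha> * Mloc q y \<alpha> \<alpha>)"
proof -
  have "q * quadpoly n d G = (\<Sum>\<alpha>\<in>Nset n d. pconst (G \<alpha> \<alpha>) * (q * Poly_Mapping.single (\<alpha> + \<alpha>) 1))"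
    unfolding quadpoly_diag[OF assms] sum_distrib_left
  proof (rule sum.cong[OF refl])
    fix \<alpha>
    have "Poly_Mapping.single (\<alpha> + \<alpha>) (G \<alpha> \<alpha>) = pconst (G \<alpha> \<alpha>) * Poly_Mapping.single (\<alpha> + \<alpha>) 1"
      by (simp add: pconst_def mult_single)
    then show "q * Poly_Mapping.single (\<alpha> + \<alpha>) (G \<alpha> \<alpha>) = pconst (G \<alpha> \<alpha>) * (q * Poly_Mapping.single (\<alpha> + \<alpha>) 1)"
      by (simp add: ac_simps)
  qed
  then show ?thesis by (simp add: Lf_sum Lf_scale Mloc_Lf)
qed

lemma pceil_le_kmin: "i \<in> {1..m} \<Longrightarrow> pceil (g i) \<le> kmin f m l g h"
  unfolding kmin_def by (rule Max_ge) auto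



lemma main_cert:
  fixes n m l r :: nat
    and f :: mpoly and g h :: "nat \<Rightarrow> mpoly"
    and Rlo Rup :: "nat \<Rightarrow> real" and T :: "nat \<Rightarrow> nat set"
  assumes r_le: "2 * r \<le> m"
    and R_ann: "\<forall>i\<in>{1..r}. Rup i > Rlo i \<and> Rlo i > 0"
    and R_ball: "\<forall>j\<in>{2*r+1..m}. Rup j > 0"
    and T_sub: "\<forall>i\<in>{1..r} \<union> {2*r+1..m}. T i \<subseteq> {1..n}"
    and T_cover: "(\<Union>i\<in>{1..r}. T i) \<union> (\<Union>j\<in>{2*r+1..m}. T j) = {1..n}"
    and g_low: "\<forall>i\<in>{1..r}. g i = sqnorm (T i) - pconst (Rlo i)"
    and g_up: "\<forall>i\<in>{1..r}. g (i + r) = pconst (Rup i) - sqnorm (T i)"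
    and g_ball: "\<forall>j\<in>{2*r+1..m}. g j = pconst (Rup j) - sqnorm (T j)"
    and k: "kmin f m l g h \<le> k"
  shows "\<exists>\<xi> G. 0 < \<xi> \<and> (\<forall>i \<alpha> \<beta>. \<alpha> \<noteq> \<beta> \<longrightarrow> G i \<alpha> \<beta> = 0) \<and>
     (\<forall>i\<in>{0..m}. \<forall>\<alpha>\<in>Nset n (k - pceil (gg g i)). 1 \<le> G i \<alpha> \<alpha>) \<and>
     pconst \<xi> = quadpoly n k (G 0) + (\<Sum>i\<in>{1..m}. g i * quadpoly n (k - pceil (g i)) (G i))"
proof -
  define cc :: "nat \<Rightarrow> real" where "cc i = (if i \<le> r then - Rlo i else if i \<le> 2*r then Rup (i - r) else Rup i)" for i
  define ss :: "nat \<Rightarrow> real" where "ss i = (if i \<le> r then 1 else -1)" for i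
  define TT where "TT i = (if i \<le> r then T i else if i \<le> 2*r then T (i - r) else T i)" for i
  define S where "S = (\<Sum>i\<in>{1..r}. Rup i) + (\<Sum>i\<in>{2*r+1..m}. Rup i)"
  define V where "V j = (2 + S) ^ (k - j)" for j
  define W where "W i j = (if i \<le> r then 1 else V j)" for i j
  have Rl: "0 < Rlo i" "Rlo i < Rup i" if "i \<in> {1..r}" for i using R_ann that by blast+
  have Rb: "0 < Rup i" if "i \<in> {2*r+1..m}" for i using R_ball that by blast
  have S0: "0 \<le> S" unfolding S_def
  proof (intro add_nonneg_nonneg sum_nonneg)
    fix i assume "i \<in> {1..r}" then have "Rlo i < Rup i \<and> 0 < Rlo i" using R_ann by blast
    then show "0 \<le> Rup i" by linarith
  next
    fix i assume "i \<in> {2*r+1..m}" then have "0 < Rup i" using R_ball by blast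
    then show "0 \<le> Rup i" by linarith
  qed
  have V1: "1 \<le> V j" for j unfolding V_def using S0 by (intro one_le_power) simp
  have gf: "\<forall>i\<in>{1..m}. g i = pconst (cc i) + pconst (ss i) * sqnorm (TT i)"
  proof
    fix i assume i: "i \<in> {1..m}"
    consider "i \<le> r" | "r < i" "i \<le> 2*r" | "2*r < i" by linarith
    then show "g i = pconst (cc i) + pconst (ss i) * sqnorm (TT i)"
    proof cases
      case 1
      then have "g i = sqnorm (T i) - pconst (Rlo i)" using g_low i by auto
      then show ?thesis using 1 by (simp add: cc_def ss_def TT_def pconst_uminus pconst_one)
    next
      case 2
      then have "i - r \<in> {1..r}" by auto
      then have "g (i - r + r) = pconst (Rup (i - r)) - sqnorm (T (i - r))" using g_up by blast
      then have "g i = pconst (Rup (i - r)) - sqnorm (T (i - r))" using 2 by simp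
      then show ?thesis using 2 by (simp add: cc_def ss_def TT_def pconst_uminus pconst_one)
    next
      case 3
      then have "i \<in> {2*r+1..m}" using i by auto
      then have "g i = pconst (Rup i) - sqnorm (T i)" using g_ball by blast
      then show ?thesis using 3 by (simp add: cc_def ss_def TT_def pconst_uminus pconst_one)
    qed
  qed
  have TTs: "\<forall>i\<in>{1..m}. TT i \<subseteq> {1..n}"
  proof
    fix i assume i: "i \<in> {1..m}"
    consider "i \<le> r" | "r < i" "i \<le> 2*r" | "2*r < i" by linarith
    then show "TT i \<subseteq> {1..n}"
    proof cases
      case 1 then show ?thesis using T_sub i by (auto simp: TT_def)
    next
      case 2 then have "i - r \<in> {1..r}" by auto
      then show ?thesis using T_sub 2 by (auto simp: TT_def)
    next
      case 3 then have "i \<in> {2*r+1..m}" using i by auto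
      then show ?thesis using T_sub 3 by (auto simp: TT_def)
    qed
  qed
  have kge: "\<forall>i\<in>{1..m}. pceil (g i) \<le> k" using pceil_le_kmin k le_trans by blast
  have W1: "\<forall>i\<in>{1..m}. \<forall>j. 1 \<le> W i j" using V1 by (simp add: W_def)
  have coef: "\<forall>\<beta>\<in>Nset n k. \<beta> \<noteq> 0 \<longrightarrow> 1 \<le> - (\<Sum>i\<in>{1..m}. cc i * (if \<beta> \<in> Nset n (k - pceil (g i)) then W i (mdeg \<beta>) else 0)
                 + ss i * (W i (mdeg \<beta> - 1) * real (card {t\<in>TT i. 0 < Poly_Mapping.lookup \<beta> t})))"
  proof (intro ballI impI)
    fix \<beta> assume b: "\<beta> \<in> Nset n k" and b0: "\<beta> \<noteq> 0"
    define j where "j = mdeg \<beta>"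
    have j1: "1 \<le> j" using b0 mdeg_eq_0[of \<beta>] unfolding j_def by linarith
    have jk: "j \<le> k" using b unfolding j_def Nset_def by simp
    define N where "N i = real (card {t\<in>TT i. 0 < Poly_Mapping.lookup \<beta> t})" for i
    define ind where "ind i = (if \<beta> \<in> Nset n (k - pceil (g i)) then W i j else 0)" for i
    define F where "F i = cc i * ind i + ss i * (W i (j - 1) * N i)" for i
    have N0: "0 \<le> N i" for i unfolding N_def by simp
    have Vj: "V (j - 1) = (2 + S) * V j"
    proof -
      have "k - (j - 1) = Suc (k - j)" using j1 jk by simp
      then show ?thesis unfolding V_def by simp
    qed
    have B: "- (F i + F (i + r)) \<ge> - Rup i * V j + (V (j - 1) - 1) * N i" if i: "i \<in> {1..r}" for i
    proof -
      have c1: "cc i = - Rlo i" "ss i = 1" "W i = (\<lambda>_. 1)" using i by (auto simp: cc_def ss_def W_def)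
      have c2: "cc (i + r) = Rup i" "ss (i + r) = -1" "W (i + r) = V" "TT (i + r) = TT i"
        using i by (auto simp: cc_def ss_def W_def TT_def fun_eq_iff)
      have N2: "N (i + r) = N i" unfolding N_def c2(4) ..
      have i1: "0 \<le> Rlo i * ind i" using Rl[OF i] by (auto simp: ind_def c1)
      have i2: "Rup i * ind (i + r) \<le> Rup i * V j"
        using Rl[OF i] V1[of j] by (auto simp: ind_def c2 intro: mult_left_mono)
      have "- (F i + F (i + r)) = Rlo i * ind i - N i - Rup i * ind (i + r) + V (j - 1) * N i"
        unfolding F_def c1 c2 N2 by (simp add: algebra_simps)
      then show ?thesis using i1 i2 by (simp add: algebra_simps)
    qed
    have C: "- F i \<ge> - Rup i * V j + (V (j - 1) - 1) * N i" if i: "i \<in> {2*r+1..m}" for i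
    proof -
      have c: "cc i = Rup i" "ss i = -1" "W i = V" using i by (auto simp: cc_def ss_def W_def fun_eq_iff)
      have i2: "Rup i * ind i \<le> Rup i * V j"
        using Rb[OF i] V1[of j] by (auto simp: ind_def c intro: mult_left_mono)
      have "- F i = - Rup i * ind i + V (j - 1) * N i"
        unfolding F_def c by (simp add: algebra_simps)
      then show ?thesis using i2 N0[of i] by (simp add: algebra_simps)
    qed
    have E1: "(\<Sum>i\<in>A. - Rup i * V j + (V (j - 1) - 1) * N i) = - (\<Sum>i\<in>A. Rup i) * V j + (V (j - 1) - 1) * (\<Sum>i\<in>A. N i)" for A
      by (simp add: sum.distrib sum_distrib_left sum_distrib_right sum_negf sum_subtractf)
    have "- S * V j + (V (j - 1) - 1) * ((\<Sum>i\<in>{1..r}. N i) + (\<Sum>i\<in>{2*r+1..m}. N i))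
        = (\<Sum>i\<in>{1..r}. - Rup i * V j + (V (j - 1) - 1) * N i) + (\<Sum>i\<in>{2*r+1..m}. - Rup i * V j + (V (j - 1) - 1) * N i)"
      unfolding E1 S_def by (simp add: algebra_simps)
    also have "\<dots> \<le> (\<Sum>i\<in>{1..r}. - (F i + F (i + r))) + (\<Sum>i\<in>{2*r+1..m}. - F i)"
      by (intro add_mono sum_mono B C)
    also have "\<dots> = - (\<Sum>i\<in>{1..m}. F i)"
      using sum_split3[OF r_le, of F] by (simp add: sum_negf[symmetric])
    finally have L: "- S * V j + (V (j - 1) - 1) * ((\<Sum>i\<in>{1..r}. N i) + (\<Sum>i\<in>{2*r+1..m}. N i)) \<le> - (\<Sum>i\<in>{1..m}. F i)" .
    have NS: "1 \<le> (\<Sum>i\<in>{1..r}. N i) + (\<Sum>i\<in>{2*r+1..m}. N i)"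
    proof -
      obtain t where t: "0 < Poly_Mapping.lookup \<beta> t"
        using b0 by (metis neq0_conv poly_mapping_eqI lookup_zero)
      then have "t \<in> Poly_Mapping.keys \<beta>" by (simp add: in_keys_iff)
      then have "t \<in> {1..n}" using b unfolding Nset_def by blast
      then have "t \<in> (\<Union>i\<in>{1..r}. T i) \<union> (\<Union>j\<in>{2*r+1..m}. T j)" unfolding T_cover .
      then obtain i where i: "i \<in> {1..r} \<union> {2*r+1..m}" "t \<in> T i" by blast
      have TTi: "TT i = T i" using i(1) by (auto simp: TT_def)
      have TTs': "TT i \<subseteq> {1..n}" using T_sub i(1) unfolding TTi by blast
      have fin: "finite {t\<in>TT i. 0 < Poly_Mapping.lookup \<beta> t}"
        by (rule finite_subset[OF _ finite_atLeastAtMost[of 1 n]]) (use TTs' in blast)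
      have "t \<in> {t\<in>TT i. 0 < Poly_Mapping.lookup \<beta> t}" using i t TTi by simp
      then have "{t\<in>TT i. 0 < Poly_Mapping.lookup \<beta> t} \<noteq> {}" by blast
      then have Ni: "1 \<le> N i" unfolding N_def using fin by (simp add: Suc_le_eq card_gt_0_iff)
      have s1: "0 \<le> (\<Sum>i\<in>{1..r}. N i)" "0 \<le> (\<Sum>i\<in>{2*r+1..m}. N i)" using N0 by (auto intro: sum_nonneg)
      from i(1) show ?thesis
      proof
        assume "i \<in> {1..r}"
        then have "N i \<le> (\<Sum>i\<in>{1..r}. N i)" using N0 by (intro member_le_sum) auto
        then show ?thesis using Ni s1 by linarith
      next
        assume "i \<in> {2*r+1..m}"
        then have "N i \<le> (\<Sum>i\<in>{2*r+1..m}. N i)" using N0 by (intro member_le_sum) auto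
        then show ?thesis using Ni s1 by linarith
      qed
    qed
    have Vm: "0 \<le> V (j - 1) - 1" using V1[of "j - 1"] by simp
    have "(V (j - 1) - 1) * 1 \<le> (V (j - 1) - 1) * ((\<Sum>i\<in>{1..r}. N i) + (\<Sum>i\<in>{2*r+1..m}. N i))"
      by (rule mult_left_mono[OF NS Vm])
    then have "V (j - 1) - 1 \<le> (V (j - 1) - 1) * ((\<Sum>i\<in>{1..r}. N i) + (\<Sum>i\<in>{2*r+1..m}. N i))" by simp
    moreover have "- S * V j = - (S * V j)" by simp
    moreover have "V (j - 1) = 2 * V j + S * V j" using Vj by (simp add: algebra_simps)
    ultimately have "1 \<le> - (\<Sum>i\<in>{1..m}. F i)" using L V1[of j] by linarith
    then show "1 \<le> - (\<Sum>i\<in>{1..m}. cc i * (if \<beta> \<in> Nset n (k - pceil (g i)) then W i (mdeg \<beta>) else 0)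
                 + ss i * (W i (mdeg \<beta> - 1) * real (card {t\<in>TT i. 0 < Poly_Mapping.lookup \<beta> t})))"
      unfolding F_def ind_def N_def j_def .
  qed
  have ex: "\<exists>G. (\<forall>i \<alpha> \<beta>. \<alpha> \<noteq> \<beta> \<longrightarrow> G i \<alpha> \<beta> = 0) \<and>
     (\<forall>i\<in>{0..m}. \<forall>\<alpha>\<in>Nset n (k - pceil (gg g i)). 1 \<le> G i \<alpha> \<alpha>) \<and>
     pconst (1 + (\<Sum>i\<in>{1..m}. cc i * W i 0)) = quadpoly n k (G 0) + (\<Sum>i\<in>{1..m}. g i * quadpoly n (k - pceil (g i)) (G i))"
    by (rule cert[OF gf TTs kge W1 coef])
  have pos: "0 < 1 + (\<Sum>i\<in>{1..m}. cc i * W i 0)"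
  proof -
    have a: "0 \<le> cc i * W i 0 + cc (i + r) * W (i + r) 0" if i: "i \<in> {1..r}" for i
    proof -
      have c: "cc i = - Rlo i" "W i 0 = 1" "cc (i + r) = Rup i" "W (i + r) 0 = V 0"
        using i by (auto simp: cc_def W_def)
      have "Rup i * 1 \<le> Rup i * V 0" using Rl[OF i] V1[of 0] by (intro mult_left_mono) auto
      then show ?thesis unfolding c using Rl[OF i] by linarith
    qed
    have b: "0 \<le> cc i * W i 0" if i: "i \<in> {2*r+1..m}" for i
    proof -
      have c: "cc i = Rup i" "W i 0 = V 0" using i by (auto simp: cc_def W_def)
      show ?thesis unfolding c using Rb[OF i] V1[of 0] by simp
    qed
    have "0 \<le> (\<Sum>i\<in>{1..r}. cc i * W i 0 + cc (i + r) * W (i + r) 0) + (\<Sum>i\<in>{2*r+1..m}. cc i * W i 0)"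
      by (intro add_nonneg_nonneg sum_nonneg a b)
    then show ?thesis unfolding sum_split3[OF r_le] by linarith
  qed
  show ?thesis
    apply (rule exI[of _ "1 + (\<Sum>i\<in>{1..m}. cc i * W i 0)"])
    using pos ex by (simp only: simp_thms)
qed



lemma mat_diag:
  assumes "\<forall>a b. a \<noteq> b \<longrightarrow> P a b = (0::real)" "finite J" "x \<in> J"
  shows "mat_mult_on J (mat_mult_on J P D) P x x = P x x * D x x * P x x"
proof -
  have i: "(\<Sum>c\<in>J. P x c * D c b) = P x x * D x b" for b
  proof -
    have "(\<Sum>c\<in>J. P x c * D c b) = (\<Sum>c\<in>J. if c = x then P x x * D x b else 0)"
      using assms(1) by (intro sum.cong) auto
    then show ?thesis using assms(2,3) by (simp add: sum.delta')
  qed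
  have "(\<Sum>b\<in>J. P x x * D x b * P b x) = (\<Sum>b\<in>J. if b = x then P x x * D x x * P x x else 0)"
    using assms(1) by (intro sum.cong) auto
  then show ?thesis unfolding mat_mult_on_def i using assms(2,3) by (simp add: sum.delta')
qed

theorem proposition1:
  fixes n m l r :: nat
    and f :: mpoly and g h :: "nat \<Rightarrow> mpoly"
    and Rlo Rup :: "nat \<Rightarrow> real" and T :: "nat \<Rightarrow> nat set"
  assumes f_vars: "in_vars n f"
    and h_vars: "\<forall>j\<in>{1..l}. in_vars n (h j)"
    and r_le: "2 * r \<le> m"
    and R_ann: "\<forall>i\<in>{1..r}. Rup i > Rlo i \<and> Rlo i > 0"
    and R_ball: "\<forall>j\<in>{2*r+1..m}. Rup j > 0"
    and T_sub: "\<forall>i\<in>{1..r} \<union> {2*r+1..m}. T i \<subseteq> {1..n}"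
    and T_cover: "(\<Union>i\<in>{1..r}. T i) \<union> (\<Union>j\<in>{2*r+1..m}. T j) = {1..n}"
    and g_low: "\<forall>i\<in>{1..r}. g i = sqnorm (T i) - pconst (Rlo i)"
    and g_up: "\<forall>i\<in>{1..r}. g (i + r) = pconst (Rup i) - sqnorm (T i)"
    and g_ball: "\<forall>j\<in>{2*r+1..m}. g j = pconst (Rup j) - sqnorm (T j)"
  shows "(\<forall>k \<ge> kmin f m l g h. LP_feasible n m l g h k) \<and> CTP n f m l g h"
proof -
  have mc: "\<exists>\<xi> G. 0 < \<xi> \<and> (\<forall>i \<alpha> \<beta>. \<alpha> \<noteq> \<beta> \<longrightarrow> G i \<alpha> \<beta> = 0) \<and>
     (\<forall>i\<in>{0..m}. \<forall>\<alpha>\<in>Nset n (k - pceil (gg g i)). 1 \<le> G i \<alpha> \<alpha>) \<and>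
     pconst \<xi> = quadpoly n k (G 0) + (\<Sum>i\<in>{1..m}. g i * quadpoly n (k - pceil (g i)) (G i))"
    if "kmin f m l g h \<le> k" for k
    by (rule main_cert[OF r_le R_ann R_ball T_sub T_cover g_low g_up g_ball that])
  have LP: "\<forall>k \<ge> kmin f m l g h. LP_feasible n m l g h k"
  proof (intro allI impI)
    fix k assume k: "kmin f m l g h \<le> k"
    obtain \<xi> G where pos: "0 < \<xi>" and off: "\<forall>i \<alpha> \<beta>. \<alpha> \<noteq> \<beta> \<longrightarrow> G i \<alpha> \<beta> = 0"
      and ge1: "\<forall>i\<in>{0..m}. \<forall>\<alpha>\<in>Nset n (k - pceil (gg g i)). 1 \<le> G i \<alpha> \<alpha>"
      and idt: "pconst \<xi> = quadpoly n k (G 0) + (\<Sum>i\<in>{1..m}. g i * quadpoly n (k - pceil (g i)) (G i))"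
      using mc[OF k] by (elim exE conjE) (rule that)
    have blocks: "\<forall>i\<in>{0..m}. diag_on (Nset n (k - pceil (gg g i))) (G i) \<and>
                     psd_on (Nset n (k - pceil (gg g i))) (\<lambda>a b. G i a b - idm a b)"
    proof
      fix i assume i: "i \<in> {0..m}"
      let ?I = "Nset n (k - pceil (gg g i))"
      have d: "diag_on ?I (G i)" using off unfolding diag_on_def by blast
      have sym: "\<forall>a\<in>?I. \<forall>b\<in>?I. G i a b - idm a b = G i b a - idm b a"
      proof (intro ballI)
        fix a b show "G i a b - idm a b = G i b a - idm b a"
          using off by (cases "a = b") (auto simp: idm_def)
      qed
      have q: "0 \<le> (\<Sum>a\<in>?I. \<Sum>b\<in>?I. v a * (G i a b - idm a b) * v b)" for v
      proof -
        have "(\<Sum>a\<in>?I. \<Sum>b\<in>?I. v a * (G i a b - idm a b) * v b) = (\<Sum>a\<in>?I. v a * (G i a a - idm a a) * v a)"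
          by (rule diag_quad) (use off finite_Nset in \<open>auto simp: idm_def\<close>)
        also have "\<dots> \<ge> 0"
        proof (rule sum_nonneg)
          fix a assume a: "a \<in> ?I"
          have "1 \<le> G i a a" using ge1 i a by blast
          then have "0 \<le> (G i a a - 1) * (v a * v a)" by simp
          moreover have "v a * (G i a a - idm a a) * v a = (G i a a - 1) * (v a * v a)"
            by (simp add: idm_def algebra_simps)
          ultimately show "0 \<le> v a * (G i a a - idm a a) * v a" by (simp only:)
        qed
        finally show ?thesis .
      qed
      show "diag_on ?I (G i) \<and> psd_on ?I (\<lambda>a b. G i a b - idm a b)"
        using d sym q unfolding psd_on_def by blast
    qed
    have ident: "pconst \<xi> = quadpoly n k (G 0)
                   + (\<Sum>i\<in>{1..m}. g i * quadpoly n (k - pceil (g i)) (G i))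
                   + (\<Sum>j\<in>{1..l}. h j * linpoly n (2 * (k - pceil (h j))) ((\<lambda>_ _. 0) j))"
      using idt by (simp add: linpoly_zero)
    show "LP_feasible n m l g h k" unfolding LP_feasible_def
      by (intro exI[of _ \<xi>] exI[of _ G] exI[of _ "\<lambda>_ _. 0"] conjI blocks ident)
  qed
  have CT: "CTP n f m l g h"
    unfolding CTP_def
  proof (intro allI impI)
    fix k assume k: "kmin f m l g h \<le> k"
    obtain \<xi> G where pos: "0 < \<xi>" and off: "\<forall>i \<alpha> \<beta>. \<alpha> \<noteq> \<beta> \<longrightarrow> G i \<alpha> \<beta> = 0"
      and ge1: "\<forall>i\<in>{0..m}. \<forall>\<alpha>\<in>Nset n (k - pceil (gg g i)). 1 \<le> G i \<alpha> \<alpha>"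
      and idt: "pconst \<xi> = quadpoly n k (G 0) + (\<Sum>i\<in>{1..m}. g i * quadpoly n (k - pceil (g i)) (G i))"
      using mc[OF k] by (elim exE conjE) (rule that)
    define J where "J = Jset n m g k"
    define P where "P x z = (if x = z then sqrt (G (fst x) (snd x) (snd x)) else 0)" for x z :: "nat \<times> monom"
    have Jeq: "J = Sigma {0..m} (\<lambda>i. Nset n (k - pceil (gg g i)))"
      by (auto simp: J_def Jset_def)
    have finJ: "finite J" unfolding Jeq using finite_Nset by blast
    have Gx: "1 \<le> G (fst x) (snd x) (snd x)" if x: "x \<in> J" for x
      using x ge1 unfolding Jeq by (cases x) auto
    have Poff: "\<forall>a b. a \<noteq> b \<longrightarrow> P a b = 0" by (simp add: P_def)
    have blk: "\<forall>x\<in>J. \<forall>z\<in>J. fst x \<noteq> fst z \<longrightarrow> P x z = 0" by (auto simp: P_def)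
    have pd: "pd_on J P"
      unfolding pd_on_def
    proof (intro conjI allI impI ballI)
      fix a b show "P a b = P b a" by (auto simp: P_def)
    next
      fix v :: "nat \<times> monom \<Rightarrow> real" assume "\<exists>a\<in>J. v a \<noteq> 0"
      then obtain a where a: "a \<in> J" "v a \<noteq> 0" by blast
      have "(\<Sum>a\<in>J. \<Sum>b\<in>J. v a * P a b * v b) = (\<Sum>a\<in>J. v a * P a a * v a)"
        by (rule diag_quad) (use Poff finJ in auto)
      also have "\<dots> > 0"
      proof (rule sum_pos2[OF finJ a(1)])
        have s0: "0 < sqrt (G (fst a) (snd a) (snd a))" using Gx[OF a(1)] by simp
        have v0: "0 < v a * v a" using a(2) by (simp add: zero_less_mult_iff linorder_neq_iff disj_commute)
        have "0 < sqrt (G (fst a) (snd a) (snd a)) * (v a * v a)" using s0 v0 by (rule mult_pos_pos)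
        moreover have "v a * P a a * v a = sqrt (G (fst a) (snd a) (snd a)) * (v a * v a)" by (simp add: P_def)
        ultimately show "0 < v a * P a a * v a" by (simp only:)
      next
        fix x assume "x \<in> J"
        then have "1 \<le> G (fst x) (snd x) (snd x)" by (rule Gx)
        then have "0 \<le> sqrt (G (fst x) (snd x) (snd x))" by simp
        then have "0 \<le> sqrt (G (fst x) (snd x) (snd x)) * (v x * v x)" by simp
        moreover have "v x * P x x * v x = sqrt (G (fst x) (snd x) (snd x)) * (v x * v x)" by (simp add: P_def)
        ultimately show "0 \<le> v x * P x x * v x" by (simp only:)
      qed
      finally show "0 < (\<Sum>a\<in>J. \<Sum>b\<in>J. v a * P a b * v b)" .
    qed
    have tr: "trace_on J (mat_mult_on J (mat_mult_on J P (Dmat g y)) P) = \<xi>" if y0: "y 0 = 1" for y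
    proof -
      have "trace_on J (mat_mult_on J (mat_mult_on J P (Dmat g y)) P)
          = (\<Sum>x\<in>J. G (fst x) (snd x) (snd x) * Mloc (gg g (fst x)) y (snd x) (snd x))"
        unfolding trace_on_def
      proof (rule sum.cong[OF refl])
        fix x assume x: "x \<in> J"
        have "sqrt (G (fst x) (snd x) (snd x)) * sqrt (G (fst x) (snd x) (snd x)) = G (fst x) (snd x) (snd x)"
          using Gx[OF x] by simp
        then show "mat_mult_on J (mat_mult_on J P (Dmat g y)) P x x = G (fst x) (snd x) (snd x) * Mloc (gg g (fst x)) y (snd x) (snd x)"
          unfolding mat_diag[OF Poff finJ x] by (simp add: P_def Dmat_def algebra_simps)
      qed
      also have "\<dots> = (\<Sum>i\<in>{0..m}. \<Sum>\<alpha>\<in>Nset n (k - pceil (gg g i)). G i \<alpha> \<alpha> * Mloc (gg g i) y \<alpha> \<alpha>)"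
        unfolding Jeq by (subst sum.Sigma) (auto simp: finite_Nset split_beta)
      also have "\<dots> = (\<Sum>i\<in>{0..m}. Lf y (gg g i * quadpoly n (k - pceil (gg g i)) (G i)))"
        using off by (simp add: Lf_quad)
      also have "\<dots> = Lf y (1 * quadpoly n k (G 0)) + (\<Sum>i\<in>{1..m}. Lf y (g i * quadpoly n (k - pceil (g i)) (G i)))"
      proof -
        have e: "{0..m} = insert 0 {1..m}" by auto
        show ?thesis unfolding e by (subst sum.insert) (auto simp: gg_def pceil_one)
      qed
      also have "\<dots> = Lf y (pconst \<xi>)"
        unfolding idt by (simp add: Lf_add Lf_sum)
      also have "\<dots> = \<xi>" using y0 by (simp add: Lf_pconst)
      finally show ?thesis .
    qed
    show "\<exists>a P. 0 < a \<and>
              (\<forall>x\<in>Jset n m g k. \<forall>z\<in>Jset n m g k. fst x \<noteq> fst z \<longrightarrow> P x z = 0) \<and>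
              pd_on (Jset n m g k) P \<and>
              (\<forall>y. (\<forall>j\<in>{1..l}. \<forall>\<alpha>\<in>Nset n (k - pceil (h j)). \<forall>\<beta>\<in>Nset n (k - pceil (h j)). Mloc (h j) y \<alpha> \<beta> = 0) \<and>
                   y 0 = 1 \<longrightarrow>
                   trace_on (Jset n m g k) (mat_mult_on (Jset n m g k) (mat_mult_on (Jset n m g k) P (Dmat g y)) P) = a)"
      using pos blk pd tr unfolding J_def by blast
  qed
  show ?thesis using LP CT by blast
qed


end
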